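(* Let $d>0$, $N\ge1$, let $\mathcal{S}$ be the 4-PAM constellation labeled by any Gray labeling, let $\boldsymbol{x},\hat{\boldsymbol{x}}\in\mathcal{S}^N$ be distinct, and let $\boldsymbol{h}=[h[1],\dots,h[N]]\in\mathbb{R}^N$ be any channel realization with $h[k]\neq0$ for some $k$ with $x[k]\neq\hat{x}[k]$. Then the asymptotic loss satisfies $\mathsf{L}(\boldsymbol{h},\boldsymbol{x},\hat{\boldsymbol{x}})\le 1.25$ dB.
   Context: $\mathcal{S}=\{s_1,s_2,s_3,s_4\}$ with $s_1=-3d$, $s_2=-d$, $s_3=d$, $s_4=3d$; the Gray labelings (bijections $\{0,1\}^2\to\mathcal{S}$ given by $\boldsymbol{q}=[q_1,\dots,q_4]$, $q_i$ the integer value of the label of $s_i$, most significant bit first) are $[0,1,3,2]$, $[0,2,3,1]$, $[1,0,2,3]$, $[2,0,1,3]$. The flat fading channel is $Y[k]=h[k]x[k]+Z[k]$ with known real coefficients $h[k]$. For each $k$ with $x[k]\neq\hat{x}[k]$: $\mu^{\mathcal{X}}_k=\sigma^{2,\mathcal{X}}_k=(x[k]-\hat{x}[k])^2/(4d^2)$; $\mu^{\mathcal{B}}_k=\sigma^{2,\mathcal{B}}_k=(x[k]-\hat{x}[k])^2/(4d^2)$ except that if $\{x[k],\hat{x}[k]\}=\{s_1,s_4\}$ then $\mu^{\mathcal{B}}_k=3$, $\sigma^{2,\mathcal{B}}_k=1$. Summing over $k$ with $x[k]\neq\hat{x}[k]$, the normalized distances are $a^{\mathcal{X}}(\boldsymbol{h},\boldsymbol{x},\hat{\boldsymbol{x}})=\sum_k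 h[k]^2\mu^{\mathcal{X}}_k/\sqrt{\sum_k h[k]^2\sigma^{2,\mathcal{X}}_k}$ (symbol-wise ML decoder) and $a^{\mathcal{B}}(\boldsymbol{h},\boldsymbol{x},\hat{\boldsymbol{x}})=\sum_k h[k]^2\mu^{\mathcal{B}}_k/\sqrt{\sum_k h[k]^2\sigma^{2,\mathcal{B}}_k}$ (bit-wise max-log decoder under the zero-crossing approximation), and the asymptotic loss is $\mathsf{L}(\boldsymbol{h},\boldsymbol{x},\hat{\boldsymbol{x}})=20\log_{10}\big(a^{\mathcal{X}}(\boldsymbol{h},\boldsymbol{x},\hat{\boldsymbol{x}})/a^{\mathcal{B}}(\boldsymbol{h},\boldsymbol{x},\hat{\boldsymbol{x}})\big)$ dB. *)

theory Defs
  imports Complex_Main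
begin

definition pam_sym :: "real \<Rightarrow> nat \<Rightarrow> real" where
  "pam_sym d i = (if i = 1 then -3*d else if i = 2 then -d else if i = 3 then d else 3*d)"

definition pam4 :: "real \<Rightarrow> real set" where
  "pam4 d = {pam_sym d 1, pam_sym d 2, pam_sym d 3, pam_sym d 4}"

text \<open>Gray labelings q = [q_1,..,q_4], q_i the integer value of the label of s_i.\<close>
definition gray_labelings :: "nat list set" where
  "gray_labelings = {[0,1,3,2], [0,2,3,1], [1,0,2,3], [2,0,1,3]}"

definition mu_X :: "real \<Rightarrow> real \<Rightarrow> real \<Rightarrow> real" where
  "mu_X d a b = (a - b)^2 / (4 * d^2)"

definition sigma2_X :: "real \<Rightarrow> real \<Rightarrow> real \<Rightarrow> real" where
  "sigma2_X d a b = (a - b)^2 / (4 * d^2)"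

definition mu_B :: "real \<Rightarrow> real \<Rightarrow> real \<Rightarrow> real" where
  "mu_B d a b = (if {a, b} = {pam_sym d 1, pam_sym d 4} then 3 else (a - b)^2 / (4 * d^2))"

definition sigma2_B :: "real \<Rightarrow> real \<Rightarrow> real \<Rightarrow> real" where
  "sigma2_B d a b = (if {a, b} = {pam_sym d 1, pam_sym d 4} then 1 else (a - b)^2 / (4 * d^2))"

definition diff_pos :: "nat \<Rightarrow> (nat \<Rightarrow> real) \<Rightarrow> (nat \<Rightarrow> real) \<Rightarrow> nat set" where
  "diff_pos N x xh = {k \<in> {1..N}. x k \<noteq> xh k}"

definition a_X :: "real \<Rightarrow> nat \<Rightarrow> (nat \<Rightarrow> real) \<Rightarrow> (nat \<Rightarrow> real) \<Rightarrow> (nat \<Rightarrow> real) \<Rightarrow> real" where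
  "a_X d N h x xh =
     (\<Sum>k\<in>diff_pos N x xh. (h k)^2 * mu_X d (x k) (xh k)) /
     sqrt (\<Sum>k\<in>diff_pos N x xh. (h k)^2 * sigma2_X d (x k) (xh k))"

definition a_B :: "real \<Rightarrow> nat \<Rightarrow> (nat \<Rightarrow> real) \<Rightarrow> (nat \<Rightarrow> real) \<Rightarrow> (nat \<Rightarrow> real) \<Rightarrow> real" where
  "a_B d N h x xh =
     (\<Sum>k\<in>diff_pos N x xh. (h k)^2 * mu_B d (x k) (xh k)) /
     sqrt (\<Sum>k\<in>diff_pos N x xh. (h k)^2 * sigma2_B d (x k) (xh k))"

definition asym_loss :: "real \<Rightarrow> nat \<Rightarrow> (nat \<Rightarrow> real) \<Rightarrow> (nat \<Rightarrow> real) \<Rightarrow> (nat \<Rightarrow> real) \<Rightarrow> real" where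
  "asym_loss d N h x xh = 20 * log 10 (a_X d N h x xh / a_B d N h x xh)"

end

theory Submission
  imports Defs
begin

lemma key_alg:
  fixes A B :: real
  assumes "A \<ge> 0" "B \<ge> 0" "A + B > 0"
  shows "(A + 9*B) * (A + B) / (A + 3*B)^2 \<le> 4/3"
proof -
  have p: "(A + 3*B)^2 > 0" using assms by (simp add: add_pos_nonneg)
  have "3 * ((A + 9*B) * (A + B)) \<le> 4 * (A + 3*B)^2"
    using sum_squares_ge_zero[of "A - 3*B" 0] by (simp add: power2_eq_square algebra_simps)
  then show ?thesis using p by (simp add: divide_simps)
qed

lemma log_bound:
  fixes r :: real
  assumes "r > 0" "r^2 \<le> 4/3"
  shows "20 * log 10 r \<le> 1.25"
proof -
  have "r^16 = (r^2)^8" by (simp add: power_mult[symmetric])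
  also have "\<dots> \<le> (4/3)^8" using assms by (intro power_mono) auto
  also have "\<dots> \<le> 10" by (simp add: power_divide)
  finally have h: "r^16 \<le> 10" .
  have "log 10 (r^16) = 16 * log 10 r" using assms by (simp add: log_nat_power)
  moreover have "log 10 (r^16) \<le> log 10 10" using h assms by (subst log_le_cancel_iff) auto
  ultimately show ?thesis by simp
qed

theorem theorem5:
  fixes d :: real and N :: nat and q :: "nat list"
    and h x xh :: "nat \<Rightarrow> real"
  assumes "d > 0" and "N \<ge> 1"
    and "q \<in> gray_labelings"
    and "\<forall>k\<in>{1..N}. x k \<in> pam4 d" and "\<forall>k\<in>{1..N}. xh k \<in> pam4 d"
    and "\<exists>k\<in>{1..N}. x k \<noteq> xh k"
    and "\<exists>k\<in>{1..N}. x k \<noteq> xh k \<and> h k \<noteq> 0"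
  shows "asym_loss d N h x xh \<le> 1.25"
proof -
  define D where "D = diff_pos N x xh"
  have finD: "finite D" unfolding D_def diff_pos_def by auto
  define e where "e k = ({x k, xh k} = {pam_sym d 1, pam_sym d 4})" for k
  define m where "m k = (x k - xh k)^2 / (4 * d^2)" for k
  define a where "a k = (if e k then 0 else (h k)^2 * m k)" for k
  define b where "b k = (if e k then (h k)^2 else 0)" for k
  have e9: "m k = 9" if "e k" for k
  proof -
    have "(x k = -3*d \<and> xh k = 3*d) \<or> (x k = 3*d \<and> xh k = -3*d)"
      using that \<open>d > 0\<close> unfolding e_def pam_sym_def by (auto simp: doubleton_eq_iff)
    then show ?thesis using \<open>d > 0\<close> unfolding m_def by (auto simp: power2_eq_square field_simps)
  qed
  have muX: "(h k)^2 * mu_X d (x k) (xh k) = a k + 9 * b k" for k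
    using e9[of k] unfolding a_def b_def mu_X_def m_def[symmetric] by auto
  have sX: "(h k)^2 * sigma2_X d (x k) (xh k) = a k + 9 * b k" for k
    using e9[of k] unfolding a_def b_def sigma2_X_def m_def[symmetric] by auto
  have muB: "(h k)^2 * mu_B d (x k) (xh k) = a k + 3 * b k" for k
    unfolding a_def b_def mu_B_def m_def e_def by auto
  have sB: "(h k)^2 * sigma2_B d (x k) (xh k) = a k + b k" for k
    unfolding a_def b_def sigma2_B_def m_def e_def by auto
  define A where "A = (\<Sum>k\<in>D. a k)"
  define B where "B = (\<Sum>k\<in>D. b k)"
  have a0: "a k \<ge> 0" for k unfolding a_def m_def by auto
  have b0: "b k \<ge> 0" for k unfolding b_def by auto
  have A0: "A \<ge> 0" unfolding A_def by (intro sum_nonneg a0)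
  have B0: "B \<ge> 0" unfolding B_def by (intro sum_nonneg b0)
  obtain k0 where k0: "k0 \<in> {1..N}" "x k0 \<noteq> xh k0" "h k0 \<noteq> 0" using assms(7) by auto
  have k0D: "k0 \<in> D" using k0 unfolding D_def diff_pos_def by auto
  have "a k0 + b k0 > 0"
  proof (cases "e k0")
    case True then show ?thesis using k0 unfolding a_def b_def by auto
  next
    case False
    have "m k0 > 0" using k0 \<open>d > 0\<close> unfolding m_def by auto
    then show ?thesis using False k0 unfolding a_def b_def by auto
  qed
  then have AB: "A + B > 0" unfolding A_def B_def sum.distrib[symmetric]
    using finD k0D by (intro sum_pos2[of D k0]) (auto intro: add_nonneg_nonneg a0 b0)
  have S1: "(\<Sum>k\<in>D. (h k)^2 * mu_X d (x k) (xh k)) = A + 9*B"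
    unfolding muX A_def B_def by (simp add: sum.distrib sum_distrib_left)
  have S2: "(\<Sum>k\<in>D. (h k)^2 * sigma2_X d (x k) (xh k)) = A + 9*B"
    unfolding sX A_def B_def by (simp add: sum.distrib sum_distrib_left)
  have S3: "(\<Sum>k\<in>D. (h k)^2 * mu_B d (x k) (xh k)) = A + 3*B"
    unfolding muB A_def B_def by (simp add: sum.distrib sum_distrib_left)
  have S4: "(\<Sum>k\<in>D. (h k)^2 * sigma2_B d (x k) (xh k)) = A + B"
    unfolding sB A_def B_def by (simp add: sum.distrib sum_distrib_left)
  have P9: "A + 9*B > 0" "A + 3*B > 0" using AB A0 B0 by linarith+
  define r where "r = a_X d N h x xh / a_B d N h x xh"
  have r: "r = (A + 9*B) / sqrt (A + 9*B) / ((A + 3*B) / sqrt (A + B))"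
    unfolding r_def a_X_def a_B_def D_def[symmetric] S1 S2 S3 S4 ..
  have rpos: "r > 0" unfolding r using P9 AB by simp
  have r2: "r = sqrt (A + 9*B) * sqrt (A + B) / (A + 3*B)"
    unfolding r using P9 AB
    by (metis (no_types, lifting) div_by_1 divide_divide_eq_left divide_divide_eq_right less_eq_real_def real_div_sqrt times_divide_eq_right)
  have "r^2 = (A + 9*B) * (A + B) / (A + 3*B)^2"
    unfolding r2 using P9 AB by (simp add: power_divide power_mult_distrib)
  also have "\<dots> \<le> 4/3" using key_alg A0 B0 AB by blast
  finally show ?thesis unfolding asym_loss_def r_def[symmetric] using log_bound rpos by blast
qed

end
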